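(* Let $A$ be an $n\times n$ Bott matrix, $\Gamma=\pi_1(M(A))$, and let $b_1$ be the first Betti number of $M(A)$. Let $S=\operatorname{span}_{\mathbb{F}_2}\{x_j^2:1\le j\le n\}\subseteq H^2(\Gamma,\mathbb{F}_2)$. Then $\dim_{\mathbb{F}_2}S=n-b_1$ and $S\subseteq\ker\beta^{(2)}$.
   Context: A Bott matrix is a strictly upper triangular $A=[a_{ij}]\in\mathbb{F}_2^{n\times n}$. The real Bott manifold is $M(A)=T^n/C_2^n$, where $C_2^n=\langle c_1,\dots,c_n\rangle$ acts freely on $T^n=(S^1)^n\subset\mathbb{C}^n$ by $$c_i\cdot(z_1,\dots,z_n)=(z_1,\dots,z_{i-1},-z_i,c_{i,i+1}(z_{i+1}),\dots,c_{i,n}(z_n)),$$ with $c_{i,j}(z)=z$ if $a_{ij}=0$ and $\bar z$ if $a_{ij}=1$. Let $\pi\colon\Gamma\to C_2^n$ be the induced surjection (kernel $\mathbb{Z}^n$). Let $c_i^*\in\operatorname{Hom}(C_2^n,\mathbb{F}_2)$ satisfy $c_i^*(c_j)=\delta_{ij}$, and put $x_i=\pi^*(c_i^* )\in H^1(\Gamma,\mathbb{F}_2)$. It is known that $H^*(\Gamma,\mathbb{F}_2)\cong\mathbb{F}_2[x_1,\dots,x_n]/(x_j^2+\alpha_jx_j:1\le j\le n)$ with $\alpha_j=\sum_{i=1}^{j-1}a_{ij}x_i$, and that $\{x_ix_j:i<j\}$ is a basis of $H^2(\Gamma,\mathbb{F}_2)$. Here $\beta^{(2)}\colon H^2(\Gamma,\mathbb{F}_2)\to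 H^3(\Gamma,\mathbb{F}_2)$ is the Bockstein homomorphism of $0\to\mathbb{F}_2\to\mathbb{Z}/4\to\mathbb{F}_2\to0$. *)

theory Defs
  imports Complex_Main "HOL-Library.Z2" "HOL-Library.Numeral_Type"
    "HOL-Algebra.Bij" "HOL-Algebra.Generated_Groups"
begin

definition bott_matrix :: "nat \<Rightarrow> (nat \<Rightarrow> nat \<Rightarrow> bit) \<Rightarrow> bool" where
  "bott_matrix n A \<longleftrightarrow> (\<forall>i\<in>{1..n}. \<forall>j\<in>{1..n}. j \<le> i \<longrightarrow> A i j = 0)"

text \<open>Points of the universal cover R^n of T^n (z_k = exp(2 pi i t_k)), coordinates 1..n.
  bott_lift n A i is the lift of c_i: -z_i corresponds to t_i + 1/2, conjugation of z_k
  to -t_k.  bott_transl k is the deck translation by the k-th unit vector.\<close>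
definition bott_lift :: "nat \<Rightarrow> (nat \<Rightarrow> nat \<Rightarrow> bit) \<Rightarrow> nat \<Rightarrow> (nat \<Rightarrow> real) \<Rightarrow> (nat \<Rightarrow> real)" where
  "bott_lift n A i t = (\<lambda>k. if k = i then t k + 1/2
                          else if i < k \<and> k \<le> n \<and> A i k = 1 then - t k else t k)"

definition bott_transl :: "nat \<Rightarrow> (nat \<Rightarrow> real) \<Rightarrow> (nat \<Rightarrow> real)" where
  "bott_transl k t = t(k := t k + 1)"

text \<open>Gamma = pi_1(M(A)) realised as the deck transformation group of R^n \<rightarrow> M(A),
  i.e. the group of bijections of R^n generated by the lifts of the c_i and Z^n.\<close>
definition bott_group :: "nat \<Rightarrow> (nat \<Rightarrow> nat \<Rightarrow> bit) \<Rightarrow> ((nat \<Rightarrow> real) \<Rightarrow> (nat \<Rightarrow> real)) monoid" where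
  "bott_group n A = (BijGroup UNIV)\<lparr>carrier :=
     generate (BijGroup UNIV) ((bott_lift n A ` {1..n}) \<union> (bott_transl ` {1..n}))\<rparr>"

text \<open>x_i = pi^*(c_i^*): the homomorphism Gamma \<rightarrow> F2 sending the lift of c_j to delta_ij and
  killing the translation lattice Z^n (= ker pi); extended by 0 outside the carrier.\<close>
definition bott_x :: "nat \<Rightarrow> (nat \<Rightarrow> nat \<Rightarrow> bit) \<Rightarrow> nat \<Rightarrow> ((nat \<Rightarrow> real) \<Rightarrow> (nat \<Rightarrow> real)) \<Rightarrow> bit" where
  "bott_x n A i = (THE f.
      (\<forall>g\<in>carrier (bott_group n A). \<forall>h\<in>carrier (bott_group n A).
          f (g \<otimes>\<^bsub>bott_group n A\<^esub> h) = f g + f h)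
    \<and> (\<forall>j\<in>{1..n}. f (bott_lift n A j) = (if j = i then 1 else 0))
    \<and> (\<forall>k\<in>{1..n}. f (bott_transl k) = 0)
    \<and> (\<forall>g. g \<notin> carrier (bott_group n A) \<longrightarrow> f g = 0))"

definition cobound :: "('g, 'b) monoid_scheme \<Rightarrow> nat \<Rightarrow> ('g list \<Rightarrow> 'r::comm_ring_1) \<Rightarrow> 'g list \<Rightarrow> 'r" where
  "cobound G k f gs = f (tl gs)
     + (\<Sum>i<k. (-1)^(i+1) * f (take i gs @ [gs!i \<otimes>\<^bsub>G\<^esub> gs!(Suc i)] @ drop (i+2) gs))
     + (-1)^(k+1) * f (butlast gs)"

definition is_cocycle :: "('g, 'b) monoid_scheme \<Rightarrow> nat \<Rightarrow> ('g list \<Rightarrow> 'r::comm_ring_1) \<Rightarrow> bool" where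
  "is_cocycle G k f \<longleftrightarrow> (\<forall>gs\<in>lists (carrier G). length gs = Suc k \<longrightarrow> cobound G k f gs = 0)"

definition is_cobound :: "('g, 'b) monoid_scheme \<Rightarrow> nat \<Rightarrow> ('g list \<Rightarrow> 'r::comm_ring_1) \<Rightarrow> bool" where
  "is_cobound G k f \<longleftrightarrow> (\<exists>h. \<forall>gs\<in>lists (carrier G). length gs = k \<longrightarrow> f gs = cobound G (k - 1) h gs)"

definition cup_sq :: "('g \<Rightarrow> bit) \<Rightarrow> 'g list \<Rightarrow> bit" where
  "cup_sq x gs = x (gs!0) * x (gs!1)"

text \<open>Dimension over F2 of the span in H^2 of the classes [c k], k \<in> I: there is J \<subseteq> I of
  size d whose classes form a basis of the span (over F2, linear combinations are subset sums).\<close>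
definition classes_dim :: "('g, 'b) monoid_scheme \<Rightarrow> (nat \<Rightarrow> 'g list \<Rightarrow> bit) \<Rightarrow> nat set \<Rightarrow> nat \<Rightarrow> bool" where
  "classes_dim G c I d \<longleftrightarrow> (\<exists>J\<subseteq>I. finite J \<and> card J = d
      \<and> (\<forall>T\<subseteq>J. T \<noteq> {} \<longrightarrow> \<not> is_cobound G 2 (\<lambda>gs. \<Sum>j\<in>T. c j gs))
      \<and> (\<forall>k\<in>I. \<exists>T\<subseteq>J. is_cobound G 2 (\<lambda>gs. c k gs - (\<Sum>j\<in>T. c j gs))))"

text \<open>Bockstein for 0 \<rightarrow> F2 \<rightarrow> Z/4 \<rightarrow> F2 \<rightarrow> 0: lift an F2-valued 2-cocycle set-theoretically
  to Z/4, apply the coboundary, divide by 2 (values lie in 2Z/4), giving an F2 3-cocycle.\<close>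
definition lift4 :: "bit \<Rightarrow> 4" where
  "lift4 b = (if b = 1 then 1 else 0)"

definition half4 :: "4 \<Rightarrow> bit" where
  "half4 z = (if z = 2 then 1 else 0)"

definition bockstein_cochain :: "('g, 'b) monoid_scheme \<Rightarrow> ('g list \<Rightarrow> bit) \<Rightarrow> 'g list \<Rightarrow> bit" where
  "bockstein_cochain G c gs = half4 (cobound G 2 (\<lambda>hs. lift4 (c hs)) gs)"

definition in_ker_bockstein :: "('g, 'b) monoid_scheme \<Rightarrow> ('g list \<Rightarrow> bit) \<Rightarrow> bool" where
  "in_ker_bockstein G c \<longleftrightarrow> is_cobound G 3 (bockstein_cochain G c)"

text \<open>b_1(M(A)) = dim_Q H^1(M(A);Q) = dim_Q Hom(pi_1, Q).\<close>
definition is_hom_Q :: "('g, 'b) monoid_scheme \<Rightarrow> ('g \<Rightarrow> rat) \<Rightarrow> bool" where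
  "is_hom_Q G f \<longleftrightarrow> (\<forall>g\<in>carrier G. \<forall>h\<in>carrier G. f (g \<otimes>\<^bsub>G\<^esub> h) = f g + f h)"

definition hom_Q_dim :: "('g, 'b) monoid_scheme \<Rightarrow> nat \<Rightarrow> bool" where
  "hom_Q_dim G d \<longleftrightarrow> (\<exists>\<phi> :: nat \<Rightarrow> 'g \<Rightarrow> rat.
      (\<forall>i<d. is_hom_Q G (\<phi> i))
    \<and> (\<forall>a :: nat \<Rightarrow> rat. (\<forall>g\<in>carrier G. (\<Sum>i<d. a i * \<phi> i g) = 0) \<longrightarrow> (\<forall>i<d. a i = 0))
    \<and> (\<forall>f. is_hom_Q G f \<longrightarrow> (\<exists>a :: nat \<Rightarrow> rat. \<forall>g\<in>carrier G. f g = (\<Sum>i<d. a i * \<phi> i g))))"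

definition betti1 :: "('g, 'b) monoid_scheme \<Rightarrow> nat" where
  "betti1 G = (THE d. hom_Q_dim G d)"

end

theory Submission
  imports Defs "HOL-Library.Function_Algebras"
begin


abbreviation BB :: "((nat \<Rightarrow> real) \<Rightarrow> (nat \<Rightarrow> real)) monoid" where
  "BB \<equiv> BijGroup UNIV"

definition gens :: "nat \<Rightarrow> (nat \<Rightarrow> nat \<Rightarrow> bit) \<Rightarrow> ((nat \<Rightarrow> real) \<Rightarrow> (nat \<Rightarrow> real)) set" where
  "gens n A = bott_lift n A ` {1..n} \<union> bott_transl ` {1..n}"

definition nf :: "nat \<Rightarrow> (nat \<Rightarrow> nat \<Rightarrow> bit) \<Rightarrow> nat \<Rightarrow> bool" where
  "nf n A m \<longleftrightarrow> \<not> (\<exists>i\<in>{1..n}. i < m \<and> m \<le> n \<and> A i m = 1)"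

lemma grpB: "group BB" by (rule group_BijGroup)

lemma bij_lift: "bott_lift n A i \<in> Bij UNIV"
proof -
  define g where "g t = (\<lambda>k. if k = i then t k - 1/2
                          else if i < k \<and> k \<le> n \<and> A i k = 1 then - t k else t k)" for t :: "nat \<Rightarrow> real"
  have "bott_lift n A i \<circ> g = id" "g \<circ> bott_lift n A i = id"
    by (auto simp: fun_eq_iff g_def bott_lift_def)
  then have "bij (bott_lift n A i)" using o_bij by blast
  then show ?thesis by (simp add: Bij_def)
qed

lemma bij_transl: "bott_transl k \<in> Bij UNIV"
proof -
  define g where "g t = t(k := t k - 1)" for t :: "nat \<Rightarrow> real"
  have "bott_transl k \<circ> g = id" "g \<circ> bott_transl k = id"
    by (auto simp: fun_eq_iff g_def bott_transl_def)
  then have "bij (bott_transl k)" using o_bij by blast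
  then show ?thesis by (simp add: Bij_def)
qed

lemma gens_sub: "gens n A \<subseteq> carrier BB"
  using bij_lift bij_transl by (auto simp: gens_def BijGroup_def)

lemma multB: "g \<in> carrier BB \<Longrightarrow> h \<in> carrier BB \<Longrightarrow> g \<otimes>\<^bsub>BB\<^esub> h = g \<circ> h"
  by (simp add: BijGroup_def compose_def o_def restrict_def)

lemma oneB: "\<one>\<^bsub>BB\<^esub> = id"
  by (simp add: BijGroup_def fun_eq_iff)

lemma carrG: "carrier (bott_group n A) = generate BB (gens n A)"
  by (simp add: bott_group_def gens_def)

lemma multG: "g \<otimes>\<^bsub>bott_group n A\<^esub> h = g \<otimes>\<^bsub>BB\<^esub> h"
  by (simp add: bott_group_def)

lemma carrG_B: "g \<in> carrier (bott_group n A) \<Longrightarrow> g \<in> carrier BB"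
  unfolding carrG using group.generate_in_carrier[OF grpB gens_sub] by blast

lemma multG': "g \<in> carrier (bott_group n A) \<Longrightarrow> h \<in> carrier (bott_group n A) \<Longrightarrow>
   g \<otimes>\<^bsub>bott_group n A\<^esub> h = g \<circ> h"
  by (simp add: multG multB carrG_B)

lemma multG_closed: "g \<in> carrier (bott_group n A) \<Longrightarrow> h \<in> carrier (bott_group n A) \<Longrightarrow>
   g \<otimes>\<^bsub>bott_group n A\<^esub> h \<in> carrier (bott_group n A)"
  unfolding carrG multG by (rule generate.eng)

lemma gens_in: "g \<in> gens n A \<Longrightarrow> g \<in> carrier (bott_group n A)"
  unfolding carrG by (rule generate.incl)

lemma lift_in: "j \<in> {1..n} \<Longrightarrow> bott_lift n A j \<in> carrier (bott_group n A)"
  by (rule gens_in) (auto simp: gens_def)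

lemma transl_in: "j \<in> {1..n} \<Longrightarrow> bott_transl j \<in> carrier (bott_group n A)"
  by (rule gens_in) (auto simp: gens_def)

definition affm :: "nat \<Rightarrow> (nat \<Rightarrow> nat \<Rightarrow> bit) \<Rightarrow> ((nat \<Rightarrow> real) \<Rightarrow> (nat \<Rightarrow> real)) \<Rightarrow> bool" where
  "affm n A \<gamma> \<longleftrightarrow> (\<forall>m. \<exists>e N::int. (e = 1 \<or> e = -1) \<and> (nf n A m \<longrightarrow> e = 1)
        \<and> (\<forall>t. \<gamma> t m = of_int e * t m + of_int N / 2))"

lemma affm_gens: "g \<in> gens n A \<Longrightarrow> affm n A g"
proof -
  assume "g \<in> gens n A"
  then consider (l) i where "i \<in> {1..n}" "g = bott_lift n A i" | (t) k where "g = bott_transl k"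
    by (auto simp: gens_def)
  then show ?thesis
  proof cases
    case l
    show ?thesis unfolding affm_def
    proof
      fix m
      show "\<exists>e N::int. (e = 1 \<or> e = -1) \<and> (nf n A m \<longrightarrow> e = 1) \<and> (\<forall>t. g t m = of_int e * t m + of_int N / 2)"
      proof (cases "m = i")
        case True then show ?thesis by (intro exI[of _ 1] exI[of _ 1]) (auto simp: l bott_lift_def)
      next
        case False
        show ?thesis
        proof (cases "i < m \<and> m \<le> n \<and> A i m = 1")
          case True then show ?thesis using l False
            by (intro exI[of _ "-1"] exI[of _ 0]) (auto simp: bott_lift_def nf_def)
        next
          case F2: False then show ?thesis using l False
            by (intro exI[of _ 1] exI[of _ 0]) (auto simp: bott_lift_def)
        qed
      qed
    qed
  next
    case t
    show ?thesis unfolding affm_def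
    proof
      fix m
      show "\<exists>e N::int. (e = 1 \<or> e = -1) \<and> (nf n A m \<longrightarrow> e = 1) \<and> (\<forall>t. g t m = of_int e * t m + of_int N / 2)"
        by (intro exI[of _ 1] exI[of _ "if m = k then 2 else 0"]) (auto simp: t bott_transl_def)
    qed
  qed
qed

lemma affm_comp: "affm n A g \<Longrightarrow> affm n A h \<Longrightarrow> affm n A (g \<circ> h)"
  unfolding affm_def
proof
  fix m
  assume g: "\<forall>m. \<exists>e N::int. (e = 1 \<or> e = -1) \<and> (nf n A m \<longrightarrow> e = 1) \<and> (\<forall>t. g t m = of_int e * t m + of_int N / 2)"
    and h: "\<forall>m. \<exists>e N::int. (e = 1 \<or> e = -1) \<and> (nf n A m \<longrightarrow> e = 1) \<and> (\<forall>t. h t m = of_int e * t m + of_int N / 2)"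
  obtain e1 N1 where 1: "(e1 = 1 \<or> e1 = -1)" "(nf n A m \<longrightarrow> e1 = 1)" "\<forall>t. g t m = of_int e1 * t m + of_int N1 / 2"
    using g by blast
  obtain e2 N2 where 2: "(e2 = 1 \<or> e2 = -1)" "(nf n A m \<longrightarrow> e2 = 1)" "\<forall>t. h t m = of_int e2 * t m + of_int N2 / 2"
    using h by blast
  show "\<exists>e N::int. (e = 1 \<or> e = -1) \<and> (nf n A m \<longrightarrow> e = 1) \<and> (\<forall>t. (g \<circ> h) t m = of_int e * t m + of_int N / 2)"
  proof -
    have a: "e1 * e2 = 1 \<or> e1 * e2 = - 1" using 1(1) 2(1) by auto
    have b: "nf n A m \<longrightarrow> e1 * e2 = 1" using 1(2) 2(2) by auto
    have c: "\<forall>t. (g \<circ> h) t m = real_of_int (e1 * e2) * t m + real_of_int (e1 * N2 + N1) / 2"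
    proof
      fix t
      have "(g \<circ> h) t m = of_int e1 * h t m + of_int N1 / 2" using 1(3) by simp
      also have "\<dots> = of_int e1 * (of_int e2 * t m + of_int N2 / 2) + of_int N1 / 2" using 2(3) by simp
      finally show "(g \<circ> h) t m = real_of_int (e1 * e2) * t m + real_of_int (e1 * N2 + N1) / 2"
        by (simp add: algebra_simps)
    qed
    show ?thesis using a b c by blast
  qed
qed

lemma affm_inv:
  assumes a: "affm n A h" and hi: "\<forall>t. h (k t) = t"
  shows "affm n A k"
  unfolding affm_def
proof
  fix m
  obtain e1 N1 where 1: "(e1 = 1 \<or> e1 = -1)" "(nf n A m \<longrightarrow> e1 = 1)" "\<forall>t. h t m = of_int e1 * t m + of_int N1 / 2"
    using a unfolding affm_def by blast
  have "\<forall>t. k t m = of_int e1 * t m + of_int (- e1 * N1) / 2"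
  proof
    fix t
    have "t m = of_int e1 * k t m + of_int N1 / 2" using 1(3) hi by metis
    then show "k t m = of_int e1 * t m + of_int (- e1 * N1) / 2" using 1(1)
      by (auto simp: algebra_simps)
  qed
  then show "\<exists>e N::int. (e = 1 \<or> e = -1) \<and> (nf n A m \<longrightarrow> e = 1) \<and> (\<forall>t. k t m = of_int e * t m + of_int N / 2)"
    using 1 by blast
qed

lemma affm_carr: "\<gamma> \<in> carrier (bott_group n A) \<Longrightarrow> affm n A \<gamma>"
  unfolding carrG
proof (induction rule: generate.induct)
  case one
  then show ?case unfolding oneB affm_def by (intro allI exI[of _ 1] exI[of _ 0]) simp
next
  case (incl h)
  then show ?case by (rule affm_gens)
next
  case (inv h)
  have hB: "h \<in> carrier BB" using inv gens_sub by blast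
  have "h \<otimes>\<^bsub>BB\<^esub> inv\<^bsub>BB\<^esub> h = \<one>\<^bsub>BB\<^esub>" using group.r_inv[OF grpB hB] .
  then have "h \<circ> inv\<^bsub>BB\<^esub> h = id" using hB group.inv_closed[OF grpB hB] by (simp add: multB oneB)
  then have "\<forall>t. h ((inv\<^bsub>BB\<^esub> h) t) = t" by (metis comp_apply id_apply)
  then show ?case using affm_gens[OF inv] affm_inv by blast
next
  case (eng h1 h2)
  have "h1 \<in> carrier BB" "h2 \<in> carrier BB"
    using eng(1,2) group.generate_in_carrier[OF grpB gens_sub] by blast+
  then have eq: "h1 \<otimes>\<^bsub>BB\<^esub> h2 = h1 \<circ> h2" by (rule multB)
  show ?case unfolding eq by (rule affm_comp[OF eng(3,4)])
qed

definition Dm :: "nat \<Rightarrow> ((nat \<Rightarrow> real) \<Rightarrow> (nat \<Rightarrow> real)) \<Rightarrow> int" where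
  "Dm m \<gamma> = \<lfloor>2 * \<gamma> (\<lambda>_. 0) m\<rfloor>"

lemma Dm_form:
  assumes "\<gamma> \<in> carrier (bott_group n A)"
  shows "\<exists>e::int. (e = 1 \<or> e = -1) \<and> (nf n A m \<longrightarrow> e = 1) \<and> (\<forall>t. \<gamma> t m = of_int e * t m + of_int (Dm m \<gamma>) / 2)"
proof -
  obtain e N where 1: "(e = 1 \<or> e = -1)" "(nf n A m \<longrightarrow> e = 1)" "\<forall>t. \<gamma> t m = of_int e * t m + of_int N / 2"
    using affm_carr[OF assms] unfolding affm_def by blast
  have "2 * \<gamma> (\<lambda>_. 0) m = of_int N" using 1(3) by simp
  then have "Dm m \<gamma> = N" unfolding Dm_def by simp
  then show ?thesis using 1 by blast
qed

lemma Dm_mult: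
  assumes g: "g \<in> carrier (bott_group n A)" and h: "h \<in> carrier (bott_group n A)"
  shows "\<exists>e::int. (e = 1 \<or> e = -1) \<and> (nf n A m \<longrightarrow> e = 1) \<and>
     Dm m (g \<otimes>\<^bsub>bott_group n A\<^esub> h) = e * Dm m h + Dm m g"
proof -
  obtain e1 where 1: "(e1 = 1 \<or> e1 = -1)" "(nf n A m \<longrightarrow> e1 = 1)" "\<forall>t. g t m = of_int e1 * t m + of_int (Dm m g) / 2"
    using Dm_form[OF g] by blast
  obtain e2 where 2: "\<forall>t. h t m = of_int e2 * t m + of_int (Dm m h) / 2"
    using Dm_form[OF h] by blast
  have h0: "2 * h (\<lambda>_. 0) m = of_int (Dm m h)" using 2 by simp
  have "2 * (g \<circ> h) (\<lambda>_. 0) m = of_int e1 * (2 * h (\<lambda>_. 0) m) + of_int (Dm m g)"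
    using 1(3) by (simp add: algebra_simps)
  also have "\<dots> = of_int (e1 * Dm m h + Dm m g)" using h0 by simp
  finally have eq: "2 * (g \<circ> h) (\<lambda>_. 0) m = of_int (e1 * Dm m h + Dm m g)" .
  have "Dm m (g \<circ> h) = e1 * Dm m h + Dm m g" by (metis Dm_def eq floor_of_int)
  then show ?thesis using 1 multG'[OF g h] by auto
qed

lemma Dm_mult_bit:
  assumes g: "g \<in> carrier (bott_group n A)" and h: "h \<in> carrier (bott_group n A)"
  shows "(of_int (Dm m (g \<otimes>\<^bsub>bott_group n A\<^esub> h)) :: bit) = of_int (Dm m g) + of_int (Dm m h)"
  using Dm_mult[OF g h, of m] by auto

lemma Dm_mult_nf:
  assumes g: "g \<in> carrier (bott_group n A)" and h: "h \<in> carrier (bott_group n A)" and "nf n A m"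
  shows "Dm m (g \<otimes>\<^bsub>bott_group n A\<^esub> h) = Dm m g + Dm m h"
  using Dm_mult[OF g h, of m] assms(3) by auto

lemma Dm_lift: "Dm m (bott_lift n A j) = (if m = j then 1 else 0)"
  by (simp add: Dm_def bott_lift_def)

lemma Dm_transl: "Dm m (bott_transl j) = (if m = j then 2 else 0)"
  by (simp add: Dm_def bott_transl_def)



lemma oneG_in: "\<one>\<^bsub>BB\<^esub> \<in> carrier (bott_group n A)"
  unfolding carrG by (rule generate.one)

lemma hom_agree:
  fixes f1 f2 :: "((nat \<Rightarrow> real) \<Rightarrow> (nat \<Rightarrow> real)) \<Rightarrow> 'r::ab_group_add"
  assumes h1: "\<forall>g\<in>carrier (bott_group n A). \<forall>h\<in>carrier (bott_group n A).
       f1 (g \<otimes>\<^bsub>bott_group n A\<^esub> h) = f1 g + f1 h"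
    and h2: "\<forall>g\<in>carrier (bott_group n A). \<forall>h\<in>carrier (bott_group n A).
       f2 (g \<otimes>\<^bsub>bott_group n A\<^esub> h) = f2 g + f2 h"
    and gg: "\<forall>g\<in>gens n A. f1 g = f2 g"
    and \<gamma>: "\<gamma> \<in> carrier (bott_group n A)"
  shows "f1 \<gamma> = f2 \<gamma>"
proof -
  have one0: "f \<one>\<^bsub>BB\<^esub> = 0" if hf: "\<forall>g\<in>carrier (bott_group n A). \<forall>h\<in>carrier (bott_group n A).
       f (g \<otimes>\<^bsub>bott_group n A\<^esub> h) = f g + f h" for f :: "_ \<Rightarrow> 'r"
  proof -
    have "\<one>\<^bsub>BB\<^esub> \<otimes>\<^bsub>BB\<^esub> \<one>\<^bsub>BB\<^esub> = \<one>\<^bsub>BB\<^esub>" using monoid.l_one[OF group.is_monoid[OF grpB]] monoid.one_closed[OF group.is_monoid[OF grpB]] by blast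
    then have "f \<one>\<^bsub>BB\<^esub> = f \<one>\<^bsub>BB\<^esub> + f \<one>\<^bsub>BB\<^esub>" using hf oneG_in multG by metis
    then show ?thesis by simp
  qed
  have inv0: "f (inv\<^bsub>BB\<^esub> h) = - f h" if hf: "\<forall>g\<in>carrier (bott_group n A). \<forall>h\<in>carrier (bott_group n A).
       f (g \<otimes>\<^bsub>bott_group n A\<^esub> h) = f g + f h" and hg: "h \<in> gens n A" for f :: "_ \<Rightarrow> 'r" and h
  proof -
    have hB: "h \<in> carrier BB" using hg gens_sub by blast
    have "h \<otimes>\<^bsub>BB\<^esub> inv\<^bsub>BB\<^esub> h = \<one>\<^bsub>BB\<^esub>" using group.r_inv[OF grpB hB] .
    moreover have "h \<in> carrier (bott_group n A)" "inv\<^bsub>BB\<^esub> h \<in> carrier (bott_group n A)"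
      unfolding carrG using hg by (auto intro: generate.incl generate.inv)
    ultimately have "f \<one>\<^bsub>BB\<^esub> = f h + f (inv\<^bsub>BB\<^esub> h)" using hf multG by metis
    then show ?thesis using one0[OF hf] by (simp add: eq_neg_iff_add_eq_0 add.commute)
  qed
  show ?thesis using \<gamma> unfolding carrG
  proof (induction rule: generate.induct)
    case one
    then show ?case using one0[OF h1] one0[OF h2] by simp
  next
    case (incl h)
    then show ?case using gg by blast
  next
    case (inv h)
    then show ?case using inv0[OF h1 inv] inv0[OF h2 inv] gg by simp
  next
    case (eng g h)
    then show ?case using h1 h2 carrG multG by metis
  qed
qed

definition xx :: "nat \<Rightarrow> (nat \<Rightarrow> nat \<Rightarrow> bit) \<Rightarrow> nat \<Rightarrow> ((nat \<Rightarrow> real) \<Rightarrow> (nat \<Rightarrow> real)) \<Rightarrow> bit" where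
  "xx n A m \<gamma> = (if \<gamma> \<in> carrier (bott_group n A) then of_int (Dm m \<gamma>) else 0)"

lemma xx_hom: "\<forall>g\<in>carrier (bott_group n A). \<forall>h\<in>carrier (bott_group n A).
       xx n A m (g \<otimes>\<^bsub>bott_group n A\<^esub> h) = xx n A m g + xx n A m h"
  by (simp add: xx_def multG_closed Dm_mult_bit)

lemma xx_lift: "j \<in> {1..n} \<Longrightarrow> xx n A m (bott_lift n A j) = (if j = m then 1 else 0)"
  by (auto simp: xx_def lift_in Dm_lift)

lemma xx_transl: "j \<in> {1..n} \<Longrightarrow> xx n A m (bott_transl j) = 0"
  by (auto simp: xx_def transl_in Dm_transl)

lemma bott_x_eq: "bott_x n A m = xx n A m"
  unfolding bott_x_def
proof (rule the_equality)
  show "(\<forall>g\<in>carrier (bott_group n A). \<forall>h\<in>carrier (bott_group n A).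
          xx n A m (g \<otimes>\<^bsub>bott_group n A\<^esub> h) = xx n A m g + xx n A m h)
    \<and> (\<forall>j\<in>{1..n}. xx n A m (bott_lift n A j) = (if j = m then 1 else 0))
    \<and> (\<forall>k\<in>{1..n}. xx n A m (bott_transl k) = 0)
    \<and> (\<forall>g. g \<notin> carrier (bott_group n A) \<longrightarrow> xx n A m g = 0)"
    using xx_hom xx_lift xx_transl by (auto simp: xx_def)
next
  fix f :: "_ \<Rightarrow> bit"
  assume a: "(\<forall>g\<in>carrier (bott_group n A). \<forall>h\<in>carrier (bott_group n A).
          f (g \<otimes>\<^bsub>bott_group n A\<^esub> h) = f g + f h)
    \<and> (\<forall>j\<in>{1..n}. f (bott_lift n A j) = (if j = m then 1 else 0))
    \<and> (\<forall>k\<in>{1..n}. f (bott_transl k) = 0)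
    \<and> (\<forall>g. g \<notin> carrier (bott_group n A) \<longrightarrow> f g = 0)"
  show "f = xx n A m"
  proof
    fix \<gamma>
    show "f \<gamma> = xx n A m \<gamma>"
    proof (cases "\<gamma> \<in> carrier (bott_group n A)")
      case True
      have "\<forall>g\<in>gens n A. f g = xx n A m g"
        using a xx_lift xx_transl by (auto simp: gens_def)
      then show ?thesis using hom_agree[OF _ xx_hom _ True] a by blast
    next
      case False
      then show ?thesis using a by (simp add: xx_def)
    qed
  qed
qed

lemma R1:
  assumes "i < j" "i \<in> {1..n}" "j \<in> {1..n}" "A i j = 1"
  shows "(bott_lift n A j \<circ> bott_lift n A i) \<circ> bott_lift n A j = bott_lift n A i"
  using assms by (auto simp: fun_eq_iff bott_lift_def)

lemma R2:
  assumes "i < m" "i \<in> {1..n}" "m \<le> n" "A i m = 1"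
  shows "(bott_transl m \<circ> bott_lift n A i) \<circ> bott_transl m = bott_lift n A i"
  using assms by (auto simp: fun_eq_iff bott_lift_def bott_transl_def)

lemma R3: "bott_lift n A j \<circ> bott_lift n A j = bott_transl j"
  by (auto simp: fun_eq_iff bott_lift_def bott_transl_def)



lemma list3: "length gs = 3 \<Longrightarrow> \<exists>a b c. gs = [a,b,c]"
  by (simp add: numeral_eq_Suc length_Suc_conv) blast

lemma list2: "length gs = 2 \<Longrightarrow> \<exists>a b. gs = [a,b]"
  by (simp add: numeral_eq_Suc length_Suc_conv) blast

lemma cob1: "cobound G (Suc 0) h [a,b] = h [b] - h [a \<otimes>\<^bsub>G\<^esub> b] + h [a]"
  by (simp add: cobound_def)

lemma cob2: "cobound G 2 f [a,b,c] = f [b,c] - f [a \<otimes>\<^bsub>G\<^esub> b, c] + f [a, b \<otimes>\<^bsub>G\<^esub> c] - f [a,b]"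
  by (simp add: cobound_def numeral_eq_Suc)

lemma xhom: "g \<in> carrier (bott_group n A) \<Longrightarrow> h \<in> carrier (bott_group n A) \<Longrightarrow>
   bott_x n A m (g \<otimes>\<^bsub>bott_group n A\<^esub> h) = bott_x n A m g + bott_x n A m h"
  using xx_hom by (simp add: bott_x_eq)

lemma bit_neg: "(- x :: bit) = x" by simp
lemma bit_sq: "(x * x :: bit) = x" by (cases x) simp_all
lemma bit_dbl: "(x + x :: bit) = 0" by (cases x) simp_all

lemma lift4_mult: "lift4 (a*b) = lift4 a * lift4 b"
  by (cases a; cases b) (simp_all add: lift4_def)
lemma lift4_add: "lift4 (a+b) = lift4 a + lift4 b - 2 * lift4 a * lift4 b"
  by (cases a; cases b) (simp_all add: lift4_def)
lemma lift4_add2: "lift4 (a+b) = lift4 a + lift4 b + 2 * lift4 (a*b)"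
  by (cases a; cases b) (simp_all add: lift4_def)
lemma two_lift4_add: "2 * lift4 (a+b) = 2 * lift4 a + 2 * lift4 b"
  by (cases a; cases b) (simp_all add: lift4_def)
lemma half4_final: "half4 (2*(lift4 e1 - lift4 e2 + lift4 e3 - lift4 e4)) = e1 - e2 + e3 - e4"
  by (cases e1; cases e2; cases e3; cases e4) (simp_all add: lift4_def half4_def)

primrec e2 :: "(nat \<Rightarrow> bit) \<Rightarrow> nat \<Rightarrow> bit" where
  "e2 b 0 = 0"
| "e2 b (Suc m) = e2 b m + b m * (\<Sum>j<m. b j)"

lemma lift_sum: "lift4 (\<Sum>j<m. b j) = (\<Sum>j<m. lift4 (b j)) + 2 * lift4 (e2 b m)"
proof (induction m)
  case 0
  then show ?case by (simp add: lift4_def)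
next
  case (Suc m)
  have "lift4 (\<Sum>j<Suc m. b j) = lift4 ((\<Sum>j<m. b j) + b m)" by simp
  also have "\<dots> = lift4 (\<Sum>j<m. b j) + lift4 (b m) + 2 * lift4 ((\<Sum>j<m. b j) * b m)" by (rule lift4_add2)
  also have "\<dots> = (\<Sum>j<m. lift4 (b j)) + lift4 (b m) + (2 * lift4 (e2 b m) + 2 * lift4 (b m * (\<Sum>j<m. b j)))"
    using Suc by (simp add: mult.commute)
  also have "\<dots> = (\<Sum>j<Suc m. lift4 (b j)) + 2 * lift4 (e2 b (Suc m))"
    by (simp add: two_lift4_add lift4_def)
  finally show ?case .
qed

lemma single_zero:
  assumes "p' = p + q"  "r' = q + r"
  shows "lift4 (q * r) - lift4 (p' * r) + lift4 (p * r') - lift4 (p * q) = 0"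
  unfolding assms lift4_mult lift4_add by (simp add: algebra_simps)

lemma comb: "S1 - S2 + S3 - S4 = (0::'a::comm_ring_1) \<Longrightarrow>
   (S1 + 2*a) - (S2 + 2*b) + (S3 + 2*c) - (S4 + 2*d) = 2*(a - b + c - d)"
proof -
  assume h: "S1 - S2 + S3 - S4 = 0"
  have "(S1 + 2*a) - (S2 + 2*b) + (S3 + 2*c) - (S4 + 2*d) = (S1 - S2 + S3 - S4) + 2*(a - b + c - d)"
    by (simp add: algebra_simps)
  then show ?thesis using h by simp
qed

lemma bock:
  assumes T: "T \<subseteq> {1..n}"
  shows "in_ker_bockstein (bott_group n A) (\<lambda>gs. \<Sum>j\<in>T. cup_sq (bott_x n A j) gs)"
proof -
  let ?G = "bott_group n A"
  let ?x = "bott_x n A"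
  define b where "b j gs = (if j \<in> T then ?x j (gs!0) * ?x j (gs!1) else 0)" for j gs
  define E where "E gs = e2 (\<lambda>j. b j gs) (Suc n)" for gs
  have c_eq: "(\<Sum>j\<in>T. cup_sq (?x j) gs) = (\<Sum>j<Suc n. b j gs)" for gs
  proof -
    have "(\<Sum>j<Suc n. b j gs) = (\<Sum>j\<in>T. b j gs)"
      by (rule sum.mono_neutral_right) (use T in \<open>auto simp: b_def\<close>)
    then show ?thesis by (simp add: b_def cup_sq_def)
  qed
  have L: "lift4 (\<Sum>j\<in>T. cup_sq (?x j) gs) = (\<Sum>j<Suc n. lift4 (b j gs)) + 2 * lift4 (E gs)" for gs
    unfolding c_eq E_def by (rule lift_sum)
  show ?thesis unfolding in_ker_bockstein_def is_cobound_def
  proof (intro exI[of _ E] ballI impI)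
    fix gs assume gs: "gs \<in> lists (carrier ?G)" "length gs = 3"
    obtain g1 g2 g3 where g: "gs = [g1,g2,g3]" using list3[OF gs(2)] by blast
    have c: "g1 \<in> carrier ?G" "g2 \<in> carrier ?G" "g3 \<in> carrier ?G" using gs(1) g by auto
    have single: "lift4 (b j [g2,g3]) - lift4 (b j [g1 \<otimes>\<^bsub>?G\<^esub> g2, g3]) + lift4 (b j [g1, g2 \<otimes>\<^bsub>?G\<^esub> g3])
        - lift4 (b j [g1,g2]) = 0" for j
    proof (cases "j \<in> T")
      case True
      show ?thesis using True
        by (simp add: b_def xhom c)
    next
      case False
      then show ?thesis by (simp add: b_def lift4_def)
    qed
    have S0: "(\<Sum>j<Suc n. lift4 (b j [g2,g3])) - (\<Sum>j<Suc n. lift4 (b j [g1 \<otimes>\<^bsub>?G\<^esub> g2, g3]))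
       + (\<Sum>j<Suc n. lift4 (b j [g1, g2 \<otimes>\<^bsub>?G\<^esub> g3])) - (\<Sum>j<Suc n. lift4 (b j [g1,g2])) = 0"
    proof -
      have "(\<Sum>j<Suc n. lift4 (b j [g2,g3]) - lift4 (b j [g1 \<otimes>\<^bsub>?G\<^esub> g2, g3]) + lift4 (b j [g1, g2 \<otimes>\<^bsub>?G\<^esub> g3])
        - lift4 (b j [g1,g2])) = (\<Sum>j<Suc n. lift4 (b j [g2,g3])) - (\<Sum>j<Suc n. lift4 (b j [g1 \<otimes>\<^bsub>?G\<^esub> g2, g3]))
       + (\<Sum>j<Suc n. lift4 (b j [g1, g2 \<otimes>\<^bsub>?G\<^esub> g3])) - (\<Sum>j<Suc n. lift4 (b j [g1,g2]))"
        by (simp only: sum.distrib sum_subtractf)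
      then show ?thesis using single by simp
    qed
    have "bockstein_cochain ?G (\<lambda>gs. \<Sum>j\<in>T. cup_sq (?x j) gs) gs
       = half4 (2 * (lift4 (E [g2,g3]) - lift4 (E [g1 \<otimes>\<^bsub>?G\<^esub> g2, g3]) + lift4 (E [g1, g2 \<otimes>\<^bsub>?G\<^esub> g3]) - lift4 (E [g1,g2])))"
      unfolding bockstein_cochain_def g cob2 L comb[OF S0] ..
    also have "\<dots> = cobound ?G 2 E gs" unfolding half4_final g cob2 ..
    finally show "bockstein_cochain ?G (\<lambda>gs. \<Sum>j\<in>T. cup_sq (?x j) gs) gs = cobound ?G (3 - 1) E gs"
      by simp
  qed
qed



lemma notcob:
  assumes T: "T \<subseteq> {1..n}" "T \<noteq> {}" and nnf: "\<forall>j\<in>T. \<not> nf n A j"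
  shows "\<not> is_cobound (bott_group n A) 2 (\<lambda>gs. \<Sum>j\<in>T. cup_sq (bott_x n A j) gs)"
proof
  let ?G = "bott_group n A"
  let ?x = "bott_x n A"
  assume "is_cobound ?G 2 (\<lambda>gs. \<Sum>j\<in>T. cup_sq (?x j) gs)"
  then obtain h where h: "\<forall>gs\<in>lists (carrier ?G). length gs = 2 \<longrightarrow>
      (\<Sum>j\<in>T. cup_sq (?x j) gs) = cobound ?G (Suc 0) h gs"
    unfolding is_cobound_def by auto
  obtain j where j: "j \<in> T" using T by blast
  then obtain i where i: "i \<in> {1..n}" "i < j" "j \<le> n" "A i j = 1" using nnf by (auto simp: nf_def)
  have jn: "j \<in> {1..n}" using j T by auto
  define a where "a = bott_lift n A i"
  define b where "b = bott_lift n A j"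
  have ac: "a \<in> carrier ?G" and bc: "b \<in> carrier ?G" using lift_in i jn by (auto simp: a_def b_def)
  have bac: "b \<otimes>\<^bsub>?G\<^esub> a \<in> carrier ?G" using multG_closed ac bc by blast
  have rel: "(b \<otimes>\<^bsub>?G\<^esub> a) \<otimes>\<^bsub>?G\<^esub> b = a"
  proof -
    have "(b \<circ> a) \<circ> b = a" unfolding a_def b_def using R1[of i j n A] i jn by blast
    then show ?thesis using multG'[OF bc ac] multG'[OF bac bc] by simp
  qed
  have xb: "?x m b = (if j = m then 1 else 0)" for m
    using xx_lift[OF jn] by (simp add: bott_x_eq b_def)
  have e1: "(\<Sum>j\<in>T. cup_sq (?x j) [b, a]) = cobound ?G (Suc 0) h [b, a]"
    using h ac bc by auto
  have e2: "(\<Sum>j\<in>T. cup_sq (?x j) [b \<otimes>\<^bsub>?G\<^esub> a, b]) = cobound ?G (Suc 0) h [b \<otimes>\<^bsub>?G\<^esub> a, b]"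
    using h bac bc by auto
  have "(\<Sum>j\<in>T. cup_sq (?x j) [b, a]) + (\<Sum>j\<in>T. cup_sq (?x j) [b \<otimes>\<^bsub>?G\<^esub> a, b])
     = (\<Sum>m\<in>T. ?x m b)"
    unfolding sum.distrib[symmetric]
  proof (rule sum.cong)
    fix m
    show "cup_sq (?x m) [b, a] + cup_sq (?x m) [b \<otimes>\<^bsub>?G\<^esub> a, b] = ?x m b"
      by (cases "?x m b"; cases "?x m a") (simp_all add: cup_sq_def xhom ac bc)
  qed simp
  also have "\<dots> = 1" using j T by (simp add: xb sum.delta finite_subset[OF T(1)])
  finally have one: "(\<Sum>j\<in>T. cup_sq (?x j) [b, a]) + (\<Sum>j\<in>T. cup_sq (?x j) [b \<otimes>\<^bsub>?G\<^esub> a, b]) = 1" .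
  have "cobound ?G (Suc 0) h [b, a] + cobound ?G (Suc 0) h [b \<otimes>\<^bsub>?G\<^esub> a, b] = 0"
    unfolding cob1 rel
    by (cases "h [a]"; cases "h [b]"; cases "h [b \<otimes>\<^bsub>?G\<^esub> a]") simp_all
  with one e1 e2 show False by simp
qed

lemma choose2: "(a + b) * (a + b - 1) div 2 = a * (a - 1) div 2 + b * (b - 1) div 2 + a * (b::int)"
proof -
  have "even (a * (a - 1))" "even (b * (b - 1))" by auto
  then obtain u v where u: "a * (a - 1) = 2 * u" and v: "b * (b - 1) = 2 * v" by (meson evenE)
  have "(a + b) * (a + b - 1) = 2 * (u + v + a * b)" using u v by (simp add: algebra_simps)
  then show ?thesis using u v by simp
qed

lemma bit_aux: "(y - (x + y + z) + x :: bit) = z"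
  by (cases x; cases y; cases z) simp_all

lemma zerocol:
  assumes k: "k \<in> {1..n}" "nf n A k"
  shows "is_cobound (bott_group n A) 2 (cup_sq (bott_x n A k))"
  unfolding is_cobound_def
proof (intro exI[of _ "\<lambda>gs. of_int (Dm k (hd gs) * (Dm k (hd gs) - 1) div 2)"] ballI impI)
  let ?G = "bott_group n A"
  fix gs assume gs: "gs \<in> lists (carrier ?G)" "length gs = 2"
  obtain g1 g2 where g: "gs = [g1,g2]" using list2[OF gs(2)] by blast
  have c: "g1 \<in> carrier ?G" "g2 \<in> carrier ?G" using gs(1) g by auto
  have D: "Dm k (g1 \<otimes>\<^bsub>?G\<^esub> g2) = Dm k g1 + Dm k g2" using Dm_mult_nf[OF c k(2)] .
  show "cup_sq (bott_x n A k) gs = cobound ?G (2 - 1) (\<lambda>gs. of_int (Dm k (hd gs) * (Dm k (hd gs) - 1) div 2)) gs"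
    unfolding g numeral_2_eq_2 diff_Suc_1 cob1 list.sel D choose2 of_int_add bit_aux
    by (simp add: cup_sq_def bott_x_eq xx_def c)
qed



definition fscale :: "rat \<Rightarrow> ('g \<Rightarrow> rat) \<Rightarrow> ('g \<Rightarrow> rat)" where
  "fscale a f = (\<lambda>x. a * f x)"

lemma fscale_vs: "vector_space fscale"
  by unfold_locales (auto simp: fscale_def fun_eq_iff algebra_simps)

lemma sum_fun_apply': "(\<Sum>v\<in>t. F v) x = (\<Sum>v\<in>t. F v x)" for F :: "'a \<Rightarrow> 'g \<Rightarrow> rat"
  by (induction t rule: infinite_finite_induct) auto

lemma dim_bound:
  fixes \<phi> \<psi> :: "nat \<Rightarrow> 'g \<Rightarrow> rat" and C :: "'g set"
  assumes ind: "\<forall>a::nat\<Rightarrow>rat. (\<forall>g\<in>C. (\<Sum>i<d. a i * \<phi> i g) = 0) \<longrightarrow> (\<forall>i<d. a i = 0)"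
    and sp: "\<forall>i<d. \<exists>c::nat\<Rightarrow>rat. \<forall>g\<in>C. \<phi> i g = (\<Sum>j<e. c j * \<psi> j g)"
  shows "d \<le> e"
proof -
  interpret V: vector_space fscale by (rule fscale_vs)
  define R where "R f = (\<lambda>g. if g \<in> C then f g else 0)" for f :: "'g \<Rightarrow> rat"
  define S where "S = (\<lambda>i. R (\<phi> i)) ` {..<d}"
  define T where "T = (\<lambda>j. R (\<psi> j)) ` {..<e}"
  have inj: "inj_on (\<lambda>i. R (\<phi> i)) {..<d}"
  proof (rule inj_onI, rule ccontr)
    fix i j assume i: "i \<in> {..<d}" and j: "j \<in> {..<d}" and eq: "R (\<phi> i) = R (\<phi> j)" and ne: "i \<noteq> j"
    define a where "a k = (if k = i then 1 else if k = j then -1 else (0::rat))" for k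
    have "\<forall>g\<in>C. (\<Sum>k<d. a k * \<phi> k g) = 0"
    proof
      fix g assume g: "g \<in> C"
      have "(\<Sum>k<d. a k * \<phi> k g) = (\<Sum>k<d. (if k = i then \<phi> i g else 0) + (if k = j then - \<phi> j g else 0))"
        by (rule sum.cong) (auto simp: a_def ne)
      also have "\<dots> = \<phi> i g - \<phi> j g" using i j by (simp add: sum.distrib)
      also have "\<dots> = 0" using fun_cong[OF eq, of g] g by (simp add: R_def)
      finally show "(\<Sum>k<d. a k * \<phi> k g) = 0" .
    qed
    with ind i have "a i = 0" by auto
    then show False by (simp add: a_def)
  qed
  have cardS: "card S = d" using inj by (simp add: S_def card_image)
  have indep: "\<not> V.dependent S"
  proof
    assume "V.dependent S"
    then obtain t u where t: "finite t" "t \<subseteq> S" and s0: "(\<Sum>v\<in>t. fscale (u v) v) = 0"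
      and v0: "\<exists>v\<in>t. u v \<noteq> 0"
      unfolding V.dependent_explicit by blast
    define a where "a i = (if R (\<phi> i) \<in> t then u (R (\<phi> i)) else 0)" for i
    have "\<forall>g\<in>C. (\<Sum>i<d. a i * \<phi> i g) = 0"
    proof
      fix g assume g: "g \<in> C"
      define I where "I = {i\<in>{..<d}. R (\<phi> i) \<in> t}"
      have tI: "t = (\<lambda>i. R (\<phi> i)) ` I" using t(2) by (auto simp: I_def S_def)
      have injI: "inj_on (\<lambda>i. R (\<phi> i)) I" using inj by (rule inj_on_subset) (auto simp: I_def)
      have "(\<Sum>i<d. a i * \<phi> i g) = (\<Sum>i\<in>I. u (R (\<phi> i)) * R (\<phi> i) g)"
        by (rule sum.mono_neutral_cong_right) (auto simp: I_def a_def R_def g)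
      also have "\<dots> = (\<Sum>v\<in>t. u v * v g)" unfolding tI by (rule sum.reindex[OF injI, symmetric, unfolded o_def])
      also have "\<dots> = (\<Sum>v\<in>t. fscale (u v) v) g" by (simp add: sum_fun_apply' fscale_def)
      also have "\<dots> = 0" using s0 by simp
      finally show "(\<Sum>i<d. a i * \<phi> i g) = 0" .
    qed
    with ind have a0: "\<forall>i<d. a i = 0" by blast
    from v0 obtain v where v: "v \<in> t" "u v \<noteq> 0" by blast
    then obtain i where "i < d" "v = R (\<phi> i)" using t(2) by (auto simp: S_def)
    with a0 v show False by (auto simp: a_def)
  qed
  have sub: "S \<subseteq> V.span T"
  proof
    fix v assume "v \<in> S"
    then obtain i where i: "i < d" and v: "v = R (\<phi> i)" by (auto simp: S_def)
    obtain c where c: "\<forall>g\<in>C. \<phi> i g = (\<Sum>j<e. c j * \<psi> j g)" using sp i by blast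
    have "v = (\<Sum>j<e. fscale (c j) (R (\<psi> j)))"
      by (rule ext) (auto simp: v R_def c sum_fun_apply' fscale_def)
    also have "\<dots> \<in> V.span T"
      by (rule V.span_sum, rule V.span_scale, rule V.span_base) (auto simp: T_def)
    finally show "v \<in> V.span T" .
  qed
  have "card S \<le> card T" using V.independent_span_bound[OF _ indep sub] by (simp add: T_def)
  also have "card T \<le> e" unfolding T_def using card_image_le[of "{..<e}"] by simp
  finally show ?thesis using cardS by simp
qed


lemma hom_dim_unique:
  assumes "hom_Q_dim G d1" "hom_Q_dim G d2" shows "d1 = d2"
proof -
  obtain \<phi> where p: "\<forall>i<d1. is_hom_Q G (\<phi> i)"
    "\<forall>a :: nat \<Rightarrow> rat. (\<forall>g\<in>carrier G. (\<Sum>i<d1. a i * \<phi> i g) = 0) \<longrightarrow> (\<forall>i<d1. a i = 0)"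
    "\<forall>f. is_hom_Q G f \<longrightarrow> (\<exists>a :: nat \<Rightarrow> rat. \<forall>g\<in>carrier G. f g = (\<Sum>i<d1. a i * \<phi> i g))"
    using assms(1) unfolding hom_Q_dim_def by blast
  obtain \<psi> where q: "\<forall>i<d2. is_hom_Q G (\<psi> i)"
    "\<forall>a :: nat \<Rightarrow> rat. (\<forall>g\<in>carrier G. (\<Sum>i<d2. a i * \<psi> i g) = 0) \<longrightarrow> (\<forall>i<d2. a i = 0)"
    "\<forall>f. is_hom_Q G f \<longrightarrow> (\<exists>a :: nat \<Rightarrow> rat. \<forall>g\<in>carrier G. f g = (\<Sum>i<d2. a i * \<psi> i g))"
    using assms(2) unfolding hom_Q_dim_def by blast
  have "\<forall>i<d1. \<exists>c. \<forall>g\<in>carrier G. \<phi> i g = (\<Sum>j<d2. c j * \<psi> j g)" using p(1) q(3) by blast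
  then have "d1 \<le> d2" by (rule dim_bound[OF p(2)])
  moreover have "\<forall>i<d2. \<exists>c. \<forall>g\<in>carrier G. \<psi> i g = (\<Sum>j<d1. c j * \<phi> j g)" using q(1) p(3) by blast
  then have "d2 \<le> d1" by (rule dim_bound[OF q(2)])
  ultimately show ?thesis by simp
qed

definition Zs :: "nat \<Rightarrow> (nat \<Rightarrow> nat \<Rightarrow> bit) \<Rightarrow> nat set" where
  "Zs n A = {k\<in>{1..n}. nf n A k}"

definition phiQ :: "nat \<Rightarrow> (nat \<Rightarrow> nat \<Rightarrow> bit) \<Rightarrow> nat \<Rightarrow> ((nat \<Rightarrow> real) \<Rightarrow> (nat \<Rightarrow> real)) \<Rightarrow> rat" where
  "phiQ n A k \<gamma> = (if \<gamma> \<in> carrier (bott_group n A) then rat_of_int (Dm k \<gamma>) / 2 else 0)"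

lemma phiQ_hom: "nf n A k \<Longrightarrow> is_hom_Q (bott_group n A) (phiQ n A k)"
  unfolding is_hom_Q_def phiQ_def
  by (auto simp: multG_closed Dm_mult_nf add_divide_distrib)

lemma homQ_transl0:
  assumes f: "is_hom_Q (bott_group n A) f" and m: "m \<in> {1..n}" "\<not> nf n A m"
  shows "f (bott_transl m) = 0"
proof -
  let ?G = "bott_group n A"
  obtain i where i: "i \<in> {1..n}" "i < m" "m \<le> n" "A i m = 1" using m by (auto simp: nf_def)
  define s where "s = bott_lift n A i"
  define t where "t = bott_transl m"
  have sc: "s \<in> carrier ?G" and tc: "t \<in> carrier ?G" using lift_in transl_in i m by (auto simp: s_def t_def)
  have tsc: "t \<otimes>\<^bsub>?G\<^esub> s \<in> carrier ?G" using multG_closed sc tc by blast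
  have "(t \<circ> s) \<circ> t = s" unfolding s_def t_def using R2[of i m n A] i by blast
  then have rel: "(t \<otimes>\<^bsub>?G\<^esub> s) \<otimes>\<^bsub>?G\<^esub> t = s" using multG'[OF tc sc] multG'[OF tsc tc] by simp
  have "f s = f t + f s + f t" using f rel tsc tc sc unfolding is_hom_Q_def by metis
  then show ?thesis unfolding t_def by simp
qed

lemma homQ_lift:
  assumes f: "is_hom_Q (bott_group n A) f" and j: "j \<in> {1..n}"
  shows "f (bott_lift n A j) = f (bott_transl j) / 2"
proof -
  let ?G = "bott_group n A"
  have sc: "bott_lift n A j \<in> carrier ?G" using lift_in j by blast
  have "bott_lift n A j \<otimes>\<^bsub>?G\<^esub> bott_lift n A j = bott_transl j" using multG'[OF sc sc] R3 by simp
  then have "f (bott_transl j) = f (bott_lift n A j) + f (bott_lift n A j)" using f sc unfolding is_hom_Q_def by metis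
  then show ?thesis by simp
qed

lemma hom_dim_Z: "hom_Q_dim (bott_group n A) (card (Zs n A))"
proof -
  let ?G = "bott_group n A"
  let ?d = "card (Zs n A)"
  have finZ: "finite (Zs n A)" by (simp add: Zs_def)
  obtain z where z: "bij_betw z {0..<?d} (Zs n A)" using ex_bij_betw_nat_finite[OF finZ] by blast
  have zZ: "i < ?d \<Longrightarrow> z i \<in> Zs n A" for i using z by (auto simp: bij_betw_def)
  have zinj: "i < ?d \<Longrightarrow> i' < ?d \<Longrightarrow> z i = z i' \<Longrightarrow> i = i'" for i i'
    using z by (auto simp: bij_betw_def inj_on_def)
  have zsurj: "m \<in> Zs n A \<Longrightarrow> \<exists>i<?d. z i = m" for m using z unfolding bij_betw_def
    by (metis atLeastLessThan_iff imageE)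
  have Zsub: "m \<in> Zs n A \<Longrightarrow> m \<in> {1..n} \<and> nf n A m" for m by (simp add: Zs_def)
  define \<Phi> where "\<Phi> i = phiQ n A (z i)" for i
  have homs: "\<forall>i<?d. is_hom_Q ?G (\<Phi> i)" unfolding \<Phi>_def using zZ Zsub phiQ_hom by blast
  have \<Phi>_tr: "\<Phi> i (bott_transl m) = (if z i = m then 1 else 0)" if "m \<in> {1..n}" for i m
    using that by (simp add: \<Phi>_def phiQ_def transl_in Dm_transl)
  have \<Phi>_lift: "\<Phi> i (bott_lift n A m) = (if z i = m then 1/2 else 0)" if "m \<in> {1..n}" for i m
    using that by (simp add: \<Phi>_def phiQ_def lift_in Dm_lift)
  have sumdelta: "(\<Sum>i<?d. a i * (if z i = m then c else 0)) = (if m \<in> Zs n A then a (THE i. i < ?d \<and> z i = m) * c else 0)"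
    for a :: "nat \<Rightarrow> rat" and c m
  proof (cases "m \<in> Zs n A")
    case True
    then obtain i0 where i0: "i0 < ?d" "z i0 = m" using zsurj by blast
    have the: "(THE i. i < ?d \<and> z i = m) = i0" by (rule the_equality) (use i0 zinj in auto)
    have "(\<Sum>i<?d. a i * (if z i = m then c else 0)) = (\<Sum>i<?d. if i = i0 then a i0 * c else 0)"
      by (rule sum.cong) (use i0 zinj in auto)
    also have "\<dots> = a i0 * c" using i0 by simp
    finally show ?thesis using True the by simp
  next
    case False
    then have "\<forall>i<?d. z i \<noteq> m" using zZ by blast
    then show ?thesis using False by simp
  qed
  have indep: "\<forall>a :: nat \<Rightarrow> rat. (\<forall>g\<in>carrier ?G. (\<Sum>i<?d. a i * \<Phi> i g) = 0) \<longrightarrow> (\<forall>i<?d. a i = 0)"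
  proof (intro allI impI)
    fix a :: "nat \<Rightarrow> rat" and i0 assume h: "\<forall>g\<in>carrier ?G. (\<Sum>i<?d. a i * \<Phi> i g) = 0" and i0: "i0 < ?d"
    have m: "z i0 \<in> {1..n}" using zZ[OF i0] Zsub by blast
    have "(\<Sum>i<?d. a i * \<Phi> i (bott_transl (z i0))) = 0" using h transl_in[OF m] by blast
    also have "(\<Sum>i<?d. a i * \<Phi> i (bott_transl (z i0))) = (\<Sum>i<?d. a i * (if z i = z i0 then 1 else 0))"
      using m by (simp add: \<Phi>_tr)
    also have "\<dots> = a i0"
    proof -
      have "(THE i. i < ?d \<and> z i = z i0) = i0" by (rule the_equality) (use i0 zinj in auto)
      then show ?thesis unfolding sumdelta using zZ[OF i0] by simp
    qed
    finally show "a i0 = 0" .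
  qed
  have span: "\<forall>f. is_hom_Q ?G f \<longrightarrow> (\<exists>a :: nat \<Rightarrow> rat. \<forall>g\<in>carrier ?G. f g = (\<Sum>i<?d. a i * \<Phi> i g))"
  proof (intro allI impI)
    fix f assume f: "is_hom_Q ?G f"
    define a where "a i = f (bott_transl (z i))" for i
    define F where "F g = (\<Sum>i<?d. a i * \<Phi> i g)" for g
    have Fhom: "\<forall>g\<in>carrier ?G. \<forall>h\<in>carrier ?G. F (g \<otimes>\<^bsub>?G\<^esub> h) = F g + F h"
      using homs by (simp add: F_def is_hom_Q_def sum.distrib[symmetric] distrib_left)
    have TH: "\<exists>i0<?d. z i0 = m \<and> (THE i. i < ?d \<and> z i = m) = i0" if mZ: "m \<in> Zs n A" for m
    proof -
      obtain i0 where i0: "i0 < ?d" "z i0 = m" using zsurj[OF mZ] by blast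
      have "(THE i. i < ?d \<and> z i = m) = i0" by (rule the_equality) (use i0 zinj in auto)
      then show ?thesis using i0 by blast
    qed
    have gens_eq: "\<forall>g\<in>gens n A. f g = F g"
    proof
      fix g assume "g \<in> gens n A"
      then consider (l) j where "j \<in> {1..n}" "g = bott_lift n A j" | (t) j where "j \<in> {1..n}" "g = bott_transl j"
        by (auto simp: gens_def)
      then show "f g = F g"
      proof cases
        case l
        show ?thesis
        proof (cases "j \<in> Zs n A")
          case True
          obtain i0 where i0: "i0 < ?d" "z i0 = j" "(THE i. i < ?d \<and> z i = j) = i0" using TH[OF True] by blast
          have "F g = a i0 * (1/2)" unfolding F_def l(2) using l(1) True i0 by (simp only: \<Phi>_lift sumdelta if_True)
          then show ?thesis using l homQ_lift[OF f l(1)] i0 by (simp add: a_def)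
        next
          case False
          have "F g = 0" unfolding F_def l(2) using l(1) False by (simp only: \<Phi>_lift sumdelta if_False)
          then show ?thesis using l homQ_lift[OF f l(1)] homQ_transl0[OF f l(1)] False by (simp add: Zs_def)
        qed
      next
        case t
        show ?thesis
        proof (cases "j \<in> Zs n A")
          case True
          obtain i0 where i0: "i0 < ?d" "z i0 = j" "(THE i. i < ?d \<and> z i = j) = i0" using TH[OF True] by blast
          have "F g = a i0 * 1" unfolding F_def t(2) using t(1) True i0 by (simp only: \<Phi>_tr sumdelta if_True)
          then show ?thesis using t i0 by (simp add: a_def)
        next
          case False
          have "F g = 0" unfolding F_def t(2) using t(1) False by (simp only: \<Phi>_tr sumdelta if_False)
          then show ?thesis using t homQ_transl0[OF f t(1)] False by (simp add: Zs_def)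
        qed
      qed
    qed
    have "\<forall>g\<in>carrier ?G. f g = F g"
      using hom_agree[OF _ Fhom gens_eq] f unfolding is_hom_Q_def by blast
    then show "\<exists>a :: nat \<Rightarrow> rat. \<forall>g\<in>carrier ?G. f g = (\<Sum>i<?d. a i * \<Phi> i g)"
      unfolding F_def by blast
  qed
  show ?thesis unfolding hom_Q_dim_def by (intro exI[of _ \<Phi>] conjI homs indep span)
qed

lemma betti: "betti1 (bott_group n A) = card (Zs n A)"
  unfolding betti1_def using hom_dim_Z hom_dim_unique by blast


lemma cob_zero: "is_cobound G 2 (\<lambda>gs. 0 :: bit)"
  unfolding is_cobound_def by (intro exI[of _ "\<lambda>_. 0"]) (simp add: cobound_def)

theorem mainTheorem8:
  fixes n :: nat and A :: "nat \<Rightarrow> nat \<Rightarrow> bit"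
  assumes "bott_matrix n A"
  shows "classes_dim (bott_group n A) (\<lambda>j. cup_sq (bott_x n A j)) {1..n}
           (n - betti1 (bott_group n A))
       \<and> (\<forall>T\<subseteq>{1..n}. in_ker_bockstein (bott_group n A)
                         (\<lambda>gs. \<Sum>j\<in>T. cup_sq (bott_x n A j) gs))"
proof
  let ?G = "bott_group n A"
  define J where "J = {1..n} - Zs n A"
  have Zsub: "Zs n A \<subseteq> {1..n}" by (auto simp: Zs_def)
  have cardJ: "card J = n - card (Zs n A)"
    unfolding J_def using card_Diff_subset[OF finite_subset[OF Zsub] Zsub] by simp
  have P1a: "J \<subseteq> {1..n}" by (auto simp: J_def)
  have P1b: "finite J" by (auto simp: J_def)
  have P2: "\<forall>T\<subseteq>J. T \<noteq> {} \<longrightarrow> \<not> is_cobound ?G 2 (\<lambda>gs. \<Sum>j\<in>T. cup_sq (bott_x n A j) gs)"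
  proof (intro allI impI)
    fix T assume T: "T \<subseteq> J" "T \<noteq> {}"
    show "\<not> is_cobound ?G 2 (\<lambda>gs. \<Sum>j\<in>T. cup_sq (bott_x n A j) gs)"
      by (rule notcob) (use T in \<open>auto simp: J_def Zs_def\<close>)
  qed
  have P3: "\<forall>k\<in>{1..n}. \<exists>T\<subseteq>J. is_cobound ?G 2 (\<lambda>gs. cup_sq (bott_x n A k) gs - (\<Sum>j\<in>T. cup_sq (bott_x n A j) gs))"
  proof
    fix k assume k: "k \<in> {1..n}"
    show "\<exists>T\<subseteq>J. is_cobound ?G 2 (\<lambda>gs. cup_sq (bott_x n A k) gs - (\<Sum>j\<in>T. cup_sq (bott_x n A j) gs))"
    proof (cases "k \<in> Zs n A")
      case True
      have "is_cobound ?G 2 (cup_sq (bott_x n A k))" using zerocol k True by (auto simp: Zs_def)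
      moreover have "(\<lambda>gs. cup_sq (bott_x n A k) gs - (\<Sum>j\<in>{}. cup_sq (bott_x n A j) gs)) = cup_sq (bott_x n A k)"
        by (rule ext) (simp only: sum.empty diff_zero)
      ultimately show ?thesis by (intro exI[of _ "{}"]) (simp only: empty_subsetI simp_thms)
    next
      case False
      have "(\<lambda>gs. cup_sq (bott_x n A k) gs - (\<Sum>j\<in>{k}. cup_sq (bott_x n A j) gs)) = (\<lambda>gs. 0)"
        by (rule ext) (simp only: sum.insert[OF finite.emptyI empty_iff[THEN iffD1, THEN notI]] sum.empty add_0_right diff_self)
      moreover have "{k} \<subseteq> J" using k False by (auto simp: J_def)
      ultimately show ?thesis using cob_zero by (intro exI[of _ "{k}"]) (simp only: simp_thms)
    qed
  qed
  show "classes_dim ?G (\<lambda>j. cup_sq (bott_x n A j)) {1..n} (n - betti1 ?G)"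
    unfolding classes_dim_def betti by (intro exI[of _ J] conjI P1a P1b cardJ P2 P3)
next
  show "\<forall>T\<subseteq>{1..n}. in_ker_bockstein (bott_group n A) (\<lambda>gs. \<Sum>j\<in>T. cup_sq (bott_x n A j) gs)"
    using bock by blast
qed

end
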